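(* Let $X$ be a projective irreducible symplectic variety with Beauville--Bogomolov--Fujiki form $q$ integral on $L:=H^2(X,\mathbb Z)$, and let $E$ be a prime exceptional divisor on $X$. Assume that (a) the linear form $-\frac{2q(E,\cdot)}{q(E)}$ on $L$ takes integer values (i.e. the class $-2E^\vee/q(E)$ is integral), and (b) either $E$ or $E/2$ is a primitive element of $L$. Then $|q(E)|\le 4\,\mathrm{Card}(A_X)$. In particular this holds for every prime exceptional divisor on a projective irreducible symplectic manifold $X$.
   Context: A (possibly singular) irreducible symplectic variety is a normal compact K\"ahler variety with canonical singularities and a symplectic reflexive $2$-form $\sigma$ such that for every quasi-\'etale $f:X'\to X$, $f^{[*]}\sigma$ generates the algebra of reflexive forms on $X'$; in the smooth case this is a simply connected compact K\"ahler manifold with $H^0(\Omega^2)=\mathbb C\sigma$, $\sigma$ symplectic. $q$ is the Beauville--Bogomolov--Fujiki form, scaled to be integral (non-degenerate) on $L=H^2(X,\mathbb Z)$; $A_X:=L^\vee/L$, with $L\hookrightarrow L^\vee$, $t\mapsto q(t,\cdot)$, is the finite discriminant group. A prime exceptional divisor is a prime divisor $E$ with $q(E)<0$. For smooth projective $X$, hypotheses (a) and (b) are known (Druel, Markman). *)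

theory Defs
  imports "HOL-Analysis.Analysis"
begin

definition bform :: "int^'n^'n \<Rightarrow> int^'n \<Rightarrow> int^'n \<Rightarrow> int" where
  "bform B x y = (\<Sum>i\<in>UNIV. \<Sum>j\<in>UNIV. x$i * B$i$j * y$j)"

definition symmetric_form :: "int^'n^'n \<Rightarrow> bool" where
  "symmetric_form B \<longleftrightarrow> (\<forall>i j. B$i$j = B$j$i)"

definition nondegenerate_form :: "int^'n^'n \<Rightarrow> bool" where
  "nondegenerate_form B \<longleftrightarrow> (\<forall>x. (\<forall>y. bform B x y = 0) \<longrightarrow> x = 0)"

text \<open>The dual lattice L^\<or> = Hom(L,Z): an integer linear form is represented by its
  coefficient vector f, acting as x \<mapsto> \<Sum>i. f$i * x$i.  The embedding
  L \<hookrightarrow> L^\<or> is t \<mapsto> q(t,-).\<close>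

definition dual_embed :: "int^'n^'n \<Rightarrow> int^'n \<Rightarrow> int^'n" where
  "dual_embed B t = (\<chi> j. \<Sum>i\<in>UNIV. t$i * B$i$j)"

definition discr_group :: "int^'n^'n \<Rightarrow> (int^'n) set set" where
  "discr_group B = (UNIV :: (int^'n) set) // {(f, g). \<exists>t. f - g = dual_embed B t}"

definition primitive :: "int^'n \<Rightarrow> bool" where
  "primitive v \<longleftrightarrow> v \<noteq> 0 \<and> (\<forall>(k::int) w. v = k *s w \<longrightarrow> \<bar>k\<bar> = 1)"

end

theory Submission imports Defs "Jordan_Normal_Form.Determinant" begin
no_notation vec_index (infixl "$" 100)
lemma aux_delta: "(i::nat) < n \<Longrightarrow> (\<Sum>ia = 0..<n. (d::int) * (if ia = i then 1 else 0) * f ia) = d * f i"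
proof -
  assume "i < n"
  have "(\<Sum>ia = 0..<n. (d::int) * (if ia = i then 1 else 0) * f ia) = (\<Sum>ia = 0..<n. if ia = i then d * f ia else 0)"
    by (rule sum.cong) auto
  also have "\<dots> = d * f i" using \<open>i < n\<close> by (subst sum.delta) auto
  finally show ?thesis .
qed

lemma jnf_inv:
  fixes M :: "int mat"
  assumes M: "M \<in> carrier_mat n n"
    and inj: "\<And>v. v \<in> carrier_vec n \<Longrightarrow> M *\<^sub>v v = 0\<^sub>v n \<Longrightarrow> v = 0\<^sub>v n"
  shows "\<exists>D. D \<noteq> 0 \<and> (\<forall>w\<in>carrier_vec n. \<exists>u\<in>carrier_vec n. M *\<^sub>v u = D \<cdot>\<^sub>v w)"
proof -
  have D: "Determinant.det M \<noteq> 0" using det_0_iff_vec_prod_zero[OF M] inj by blast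
  have adj: "adj_mat M \<in> carrier_mat n n" "M * adj_mat M = Determinant.det M \<cdot>\<^sub>m 1\<^sub>m n"
    using adj_mat[OF M] by auto
  show ?thesis
  proof (intro exI conjI ballI)
    show "Determinant.det M \<noteq> 0" by fact
    fix w :: "int vec" assume w: "w \<in> carrier_vec n"
    show "\<exists>u\<in>carrier_vec n. M *\<^sub>v u = Determinant.det M \<cdot>\<^sub>v w"
    proof (intro bexI)
      show "adj_mat M *\<^sub>v w \<in> carrier_vec n" using adj w by auto
      have "M *\<^sub>v (adj_mat M *\<^sub>v w) = (M * adj_mat M) *\<^sub>v w"
        using assoc_mult_mat_vec[OF M adj(1) w] by simp
      also have "\<dots> = Determinant.det M \<cdot>\<^sub>v w" unfolding adj(2) using w
        by (intro eq_vecI) (auto simp: scalar_prod_def aux_delta)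
      finally show "M *\<^sub>v (adj_mat M *\<^sub>v w) = Determinant.det M \<cdot>\<^sub>v w" .
    qed
  qed
qed
lemma dual_add: "dual_embed B (s + t) = dual_embed B s + dual_embed B t"
  by (simp add: dual_embed_def Finite_Cartesian_Product.vec_eq_iff sum.distrib distrib_right)
lemma dual_diff: "dual_embed B (s - t) = dual_embed B s - dual_embed B t"
  by (simp add: dual_embed_def Finite_Cartesian_Product.vec_eq_iff sum_subtractf left_diff_distrib)
lemma dual_smult: "dual_embed B (c *s t) = c *s dual_embed B t"
  by (simp add: dual_embed_def Finite_Cartesian_Product.vec_eq_iff sum_distrib_left mult.assoc)
lemma dual_zero: "dual_embed B 0 = 0" by (simp add: dual_embed_def Finite_Cartesian_Product.vec_eq_iff)
lemma bform_dual: "bform B x y = (\<Sum>j\<in>UNIV. dual_embed B x $ j * y $ j)"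
  unfolding bform_def dual_embed_def by (subst sum.swap) (simp add: sum_distrib_right)
lemma dual_inj: "nondegenerate_form B \<Longrightarrow> dual_embed B t = 0 \<Longrightarrow> t = 0"
  unfolding nondegenerate_form_def by (simp add: bform_dual)
lemma bform_axis: "bform B x (axis j 1) = dual_embed B x $ j"
  by (simp add: bform_dual axis_def if_distrib[of "\<lambda>z. a * z" for a] cong: if_cong)

definition relR :: "int^'n^'n \<Rightarrow> ((int^'n) \<times> (int^'n)) set" where
  "relR B = {(f, g). \<exists>t. f - g = dual_embed B t}"

lemma equiv_relR: "equiv UNIV (relR B)"
  unfolding equiv_def refl_on_def sym_def trans_def relR_def
proof (intro conjI allI impI; clarsimp)
  show "\<exists>t. dual_embed B t = 0" using dual_zero by metis
  fix x y t assume "x - y = dual_embed B t"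
  then show "\<exists>t. y - x = dual_embed B t"
    by (metis dual_diff dual_zero diff_zero minus_diff_eq)
next
  fix x y z t s assume "x - y = dual_embed B t" "y - z = dual_embed B s"
  then show "\<exists>t. x - z = dual_embed B t"
    by (metis dual_add diff_add_cancel add_diff_eq)
qed
lemma dual_surj_mult:
  fixes B :: "int^'n^'n"
  assumes nondeg: "nondegenerate_form B"
  shows "\<exists>D::int. D \<noteq> 0 \<and> (\<forall>f. \<exists>t. dual_embed B t = D *s f)"
proof -
  let ?n = "CARD('n)"
  obtain g where g: "bij_betw g {0..<?n} (UNIV::'n set)"
    using ex_bij_betw_nat_finite[of "UNIV::'n set"] by auto
  define M :: "int mat" where "M = Matrix.mat ?n ?n (\<lambda>(a,b). B $ g b $ g a)"
  define toV :: "int vec \<Rightarrow> int^'n" where "toV u = (\<chi> k. vec_index u (inv_into {0..<?n} g k))" for u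
  have Mc: "M \<in> carrier_mat ?n ?n" unfolding M_def by simp
  have ginv: "inv_into {0..<?n} g (g b) = b" if "b < ?n" for b
    using g that by (simp add: bij_betw_inv_into_left)
  have key: "vec_index (M *\<^sub>v u) a = dual_embed B (toV u) $ g a"
    if u: "u \<in> carrier_vec ?n" and a: "a < ?n" for u a
  proof -
    have "vec_index (M *\<^sub>v u) a = (\<Sum>b\<in>{0..<?n}. B $ g b $ g a * vec_index u b)"
      using u a by (simp add: M_def scalar_prod_def)
    also have "\<dots> = (\<Sum>b\<in>{0..<?n}. toV u $ g b * B $ g b $ g a)"
      by (rule sum.cong) (auto simp: toV_def ginv)
    also have "\<dots> = (\<Sum>k\<in>UNIV. toV u $ k * B $ k $ g a)"
      using sum.reindex_bij_betw[OF g, of "\<lambda>k. toV u $ k * B $ k $ g a"] by simp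
    also have "\<dots> = dual_embed B (toV u) $ g a" by (simp add: dual_embed_def)
    finally show ?thesis .
  qed
  have surjg: "\<exists>a<?n. k = g a" for k
  proof -
    have "k \<in> g ` {0..<?n}" using g unfolding bij_betw_def by auto
    then show ?thesis by auto
  qed
  have inj: "v = 0\<^sub>v ?n" if v: "v \<in> carrier_vec ?n" and Mv: "M *\<^sub>v v = 0\<^sub>v ?n" for v
  proof -
    have "dual_embed B (toV v) = 0"
    proof (subst Finite_Cartesian_Product.vec_eq_iff, intro allI)
      fix k obtain a where a: "a < ?n" "k = g a" using surjg by blast
      show "dual_embed B (toV v) $ k = 0 $ k" using key[OF v a(1)] Mv a by simp
    qed
    then have "toV v = 0" using dual_inj[OF nondeg] by blast
    then have "vec_index v b = 0" if "b < ?n" for b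
      using that ginv[OF that] by (simp add: toV_def Finite_Cartesian_Product.vec_eq_iff, metis)
    then show ?thesis using v by (intro eq_vecI) auto
  qed
  obtain D where D: "D \<noteq> 0" "\<forall>w\<in>carrier_vec ?n. \<exists>u\<in>carrier_vec ?n. M *\<^sub>v u = D \<cdot>\<^sub>v w"
    using jnf_inv[OF Mc inj] by blast
  show ?thesis
  proof (rule exI, intro conjI allI)
    show "D \<noteq> 0" by fact
    fix f :: "int^'n"
    define w where "w = Matrix.vec ?n (\<lambda>a. f $ g a)"
    have wc: "w \<in> carrier_vec ?n" unfolding w_def by simp
    obtain u where u: "u \<in> carrier_vec ?n" "M *\<^sub>v u = D \<cdot>\<^sub>v w" using D(2) wc by blast
    have "dual_embed B (toV u) $ k = (D *s f) $ k" for k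
    proof -
      obtain a where a: "a < ?n" "k = g a" using surjg by blast
      show ?thesis
        using key[OF u(1) a(1)] u(2) a wc by (simp add: w_def)
    qed
    then show "\<exists>t. dual_embed B t = D *s f"
      by (metis Finite_Cartesian_Product.vec_eq_iff)
  qed
qed
lemma discr_finite:
  fixes B :: "int^'n^'n"
  assumes nondeg: "nondegenerate_form B"
  shows "finite (discr_group B)"
proof -
  obtain D0 :: int where D0: "D0 \<noteq> 0" "\<forall>f. \<exists>t. dual_embed B t = D0 *s f"
    using dual_surj_mult[OF nondeg] by blast
  define D where "D = \<bar>D0\<bar>"
  have Dpos: "D > 0" using D0 by (simp add: D_def)
  have Dsurj: "\<exists>t. dual_embed B t = D *s f" for f
  proof -
    obtain t where "dual_embed B t = D0 *s f" using D0 by blast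
    then have "dual_embed B (sgn D0 *s t) = D *s f"
      by (simp add: dual_smult D_def abs_sgn vector_smult_assoc mult.commute)
    then show ?thesis by blast
  qed
  define S where "S = {r::int^'n. \<forall>i. r $ i \<in> {0..<D}}"
  have "S \<subseteq> (\<lambda>h. \<chi> i. h i) ` (Pi\<^sub>E UNIV (\<lambda>_. {0..<D}))"
  proof
    fix r assume r: "r \<in> S"
    have "r = (\<chi> i. (\<lambda>i. r $ i) i)" by simp
    moreover have "(\<lambda>i. r $ i) \<in> Pi\<^sub>E UNIV (\<lambda>_. {0..<D})" using r by (auto simp: S_def)
    ultimately show "r \<in> (\<lambda>h. \<chi> i. h i) ` (Pi\<^sub>E UNIV (\<lambda>_. {0..<D}))" by blast
  qed
  then have finS: "finite S" by (rule finite_subset) (intro finite_imageI finite_PiE; simp)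
  have "discr_group B \<subseteq> (\<lambda>r. relR B `` {r}) ` S"
  proof
    fix X assume "X \<in> discr_group B"
    then obtain f where X: "X = relR B `` {f}"
      unfolding discr_group_def relR_def[symmetric] by (auto elim: quotientE)
    define r where "r = (\<chi> i. f $ i mod D)"
    define q where "q = (\<chi> i. f $ i div D)"
    have "f - r = D *s q" by (simp add: r_def q_def Finite_Cartesian_Product.vec_eq_iff minus_mod_eq_mult_div)
    then obtain t where "f - r = dual_embed B t" using Dsurj by metis
    then have "(f, r) \<in> relR B" by (auto simp: relR_def)
    then have "X = relR B `` {r}" unfolding X by (rule equiv_class_eq[OF equiv_relR])
    moreover have "r \<in> S" using Dpos by (simp add: r_def S_def)
    ultimately show "X \<in> (\<lambda>r. relR B `` {r}) ` S" by blast
  qed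
  then show ?thesis using finS by (rule finite_subset[OF _ finite_imageI])
qed

lemma prim_dvd:
  fixes c m :: int and t w :: "int^'n"
  assumes pw: "primitive w" and c: "c \<noteq> 0" and eq: "c *s t = m *s w"
  shows "c dvd m"
proof -
  define g where "g = gcd c m"
  have g0: "g \<noteq> 0" using c by (simp add: g_def)
  define c' where "c' = c div g"
  define m' where "m' = m div g"
  have cc: "c = g * c'" "m = g * m'" by (simp_all add: c'_def m'_def g_def)
  have cop: "coprime c' m'" unfolding c'_def m'_def g_def using c by (intro div_gcd_coprime) auto
  have "c' dvd w $ i" for i
  proof -
    have "c * t $ i = m * w $ i" using eq by (metis vector_smult_component)
    then have "c' * t $ i = m' * w $ i" using g0 by (simp add: cc mult.assoc)
    then have "c' dvd m' * w $ i" by (metis dvd_triv_left)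
    then show ?thesis using cop by (simp add: coprime_dvd_mult_right_iff)
  qed
  then have "w = c' *s (\<chi> i. w $ i div c')"
    by (simp add: Finite_Cartesian_Product.vec_eq_iff)
  then have "\<bar>c'\<bar> = 1" using pw unfolding primitive_def by blast
  then have "c dvd g" using cc by (auto simp: abs_if split: if_splits)
  also have "g dvd m" by (simp add: g_def)
  finally show ?thesis .
qed
theorem proposition4:
  fixes B :: "int^'n^'n" and E :: "int^'n"
  assumes sym: "symmetric_form B"
    and nondeg: "nondegenerate_form B"
    and neg: "bform B E E < 0"
    and a: "\<forall>x. bform B E E dvd 2 * bform B E x"
    and b: "primitive E \<or> (\<exists>w. E = 2 *s w \<and> primitive w)"
  shows "\<bar>bform B E E\<bar> \<le> 4 * int (card (discr_group B))"
proof -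
  define c where "c = bform B E E"
  have c0: "c \<noteq> 0" using neg by (simp add: c_def)
  define \<phi> where "\<phi> = dual_embed B E"
  have dv: "c dvd 2 * \<phi> $ j" for j
    using a[rule_format, of "axis j 1"] by (simp add: c_def \<phi>_def bform_axis)
  define f where "f = (\<chi> j. (2 * \<phi> $ j) div c)"
  have cf: "c *s f = 2 *s \<phi>"
    using dv by (simp add: f_def Finite_Cartesian_Product.vec_eq_iff)
  obtain w e where w: "primitive w" "E = e *s w" "e dvd 2"
  proof (cases "primitive E")
    case True then show ?thesis using that[of E 1] by simp
  next
    case False
    then obtain w where "E = 2 *s w" "primitive w" using b by blast
    then show ?thesis using that[of w 2] by simp
  qed
  have key: "c dvd 4 * k" if t: "k *s f = dual_embed B t" for k t
  proof -
    have "dual_embed B (c *s t) = c *s (k *s f)" by (simp add: dual_smult t)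
    also have "\<dots> = k *s (c *s f)" by (simp add: vector_smult_assoc mult.commute)
    also have "\<dots> = dual_embed B ((2 * k) *s E)"
      by (simp add: cf \<phi>_def dual_smult vector_smult_assoc mult.commute)
    finally have "dual_embed B (c *s t - (2 * k) *s E) = 0" by (simp add: dual_diff)
    then have "c *s t - (2 * k) *s E = 0" using dual_inj[OF nondeg] by blast
    then have "c *s t = (2 * k * e) *s w" using w(2)
      by (simp add: vector_smult_assoc)
    then have "c dvd 2 * k * e" by (rule prim_dvd[OF w(1) c0])
    also have "2 * k * e dvd 4 * k" using w(3) by (metis mult_dvd_mono dvd_refl mult.commute mult.left_commute numeral_Bit0 mult_2)
    finally show ?thesis .
  qed
  define d where "d = - c"
  have dpos: "d > 0" using neg by (simp add: d_def c_def)
  define N where "N = nat ((d + 3) div 4)"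
  define h where "h = (\<lambda>k::nat. relR B `` {int k *s f})"
  have inj: "inj_on h {0..<N}"
  proof (rule inj_onI)
    fix k1 k2 assume k: "k1 \<in> {0..<N}" "k2 \<in> {0..<N}" and eq: "h k1 = h k2"
    have "(int k1 *s f, int k2 *s f) \<in> relR B"
      using eq unfolding h_def by (rule eq_equiv_class[OF _ equiv_relR]) auto
    then obtain t where "int k1 *s f - int k2 *s f = dual_embed B t" by (auto simp: relR_def)
    then have "(int k1 - int k2) *s f = dual_embed B t"
      by (simp add: Finite_Cartesian_Product.vec_eq_iff algebra_simps)
    then have dd: "c dvd 4 * (int k1 - int k2)" by (rule key)
    show "k1 = k2"
    proof (rule ccontr)
      assume "k1 \<noteq> k2"
      then have "\<bar>c\<bar> \<le> \<bar>4 * (int k1 - int k2)\<bar>" using dd by (intro dvd_imp_le_int) auto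
      moreover have "\<bar>4 * (int k1 - int k2)\<bar> < d" using k dpos unfolding N_def by auto
      ultimately show False by (simp add: d_def)
    qed
  qed
  have sub: "h ` {0..<N} \<subseteq> discr_group B"
    unfolding h_def discr_group_def relR_def[symmetric] by (auto intro!: quotientI)
  have "N \<le> card (discr_group B)"
    using card_mono[OF discr_finite[OF nondeg] sub] card_image[OF inj] by simp
  moreover have "d \<le> 4 * int N" unfolding N_def using dpos by auto
  ultimately show ?thesis using dpos by (simp add: c_def d_def)
qed
end
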